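(* Let $k$ be a field, $Q,q\in k^\times$, $d\ge1$ and $r\geq d$. Then for any $n\ge1$ and any $\mathbf a\in\mathbb I_n^d$, the $\mathcal H^B_{Q,q}(d)$-module $V(\mathbf a,n)$ is isomorphic to $V(\mathbf b,2r+1)$ for some $\mathbf b\in\mathbb I_{2r+1}^d$.
   Context: $\mathcal H^B_{Q,q}(d)$ is the algebra generated by $T_0,\dots,T_{d-1}$ with relations $(T_0+Q)(T_0-Q^{-1})=0$; $(T_i+q)(T_i-q^{-1})=0$ ($i>0$); $T_iT_{i+1}T_i=T_{i+1}T_iT_{i+1}$ ($i>0$); $T_0T_1T_0T_1=T_1T_0T_1T_0$; $T_iT_j=T_jT_i$ ($|i-j|>1$). For $n=2s$ let $\mathbb I_n=\{-\tfrac{2s-1}{2},\dots,-\tfrac12,\tfrac12,\dots,\tfrac{2s-1}{2}\}$ and for $n=2s+1$ let $\mathbb I_n=\{-s,\dots,s\}$; $V_n$ has basis $\{v_i:i\in\mathbb I_n\}$, and $v_{\mathbf a}=v_{a_1}\otimes\cdots\otimes v_{a_d}$. $R_q(v_i\otimes v_j)=q^{-1}v_i\otimes v_j$ if $i=j$, $v_j\otimes v_i$ if $i<j$, $v_j\otimes v_i+(q^{-1}-q)v_i\otimes v_j$ if $i>j$; $K_Q(v_i)=Q^{-1}v_i$ if $i=0$, $v_{-i}$ if $i>0$, $v_{-i}+(Q^{-1}-Q)v_i$ if $i<0$. The algebra acts on $V_n^{\otimes d}$ from the right: $T_i$ ($i>0$) by $R_q$ on factors $i,i+1$, $T_0$ by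 $K_Q$ on the first factor. The Weyl group $W^B(d)$ (Coxeter generators $s_0,\dots,s_{d-1}$) acts on $\mathbb I_n^d$ by $s_i$ ($i>0$) swapping the entries $a_i,a_{i+1}$ and $s_0$ replacing $a_1$ by $-a_1$. $V(\mathbf a,n)$ is the subspace of $V_n^{\otimes d}$ spanned by $\{v_{\sigma\mathbf a}:\sigma\in W^B(d)\}$; it is an $\mathcal H^B_{Q,q}(d)$-submodule. *)

theory Defs
  imports Main
begin

text \<open>Index set I_n encoded by doubling: an index i (integer or half-integer)
  is represented by the integer 2i. Thus I_n = {j. |j| <= n-1, j + n odd}.\<close>
definition idx :: "nat \<Rightarrow> int set" where
  "idx n = {j. \<bar>j\<bar> \<le> int n - 1 \<and> odd (j + int n)}"

definition words :: "nat \<Rightarrow> nat \<Rightarrow> int list set" where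
  "words n d = {a. length a = d \<and> set a \<subseteq> idx n}"

text \<open>Vectors of V_n^{\<otimes>d}: coordinate functions w.r.t. the basis v_a, a in I_n^d.\<close>
definition tensor_space :: "nat \<Rightarrow> nat \<Rightarrow> (int list \<Rightarrow> 'k::field) set" where
  "tensor_space n d = {f. \<forall>a. a \<notin> words n d \<longrightarrow> f a = 0}"

definition bvec :: "int list \<Rightarrow> int list \<Rightarrow> 'k::field" where
  "bvec a = (\<lambda>b. if b = a then 1 else 0)"

text \<open>Swap positions i and i+1 (1-indexed), i.e. list positions i-1 and i.\<close>
definition swp :: "nat \<Rightarrow> int list \<Rightarrow> int list" where
  "swp i a = a[i - 1 := a ! i, i := a ! (i - 1)]"

definition negfst :: "int list \<Rightarrow> int list" where
  "negfst a = a[0 := - (a ! 0)]"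

definition Tbasis :: "'k::field \<Rightarrow> 'k \<Rightarrow> nat \<Rightarrow> int list \<Rightarrow> int list \<Rightarrow> 'k" where
  "Tbasis Q q i a =
    (if i = 0 then
       (let x = a ! 0 in
        if x = 0 then (\<lambda>b. inverse Q * bvec a b)
        else if x > 0 then bvec (negfst a)
        else (\<lambda>b. bvec (negfst a) b + (inverse Q - Q) * bvec a b))
     else
       (let x = a ! (i - 1); y = a ! i in
        if x = y then (\<lambda>b. inverse q * bvec a b)
        else if x < y then bvec (swp i a)
        else (\<lambda>b. bvec (swp i a) b + (inverse q - q) * bvec a b)))"

text \<open>Right action of T_i on V_n^{\<otimes>d}, extended linearly.\<close>
definition Tact :: "'k::field \<Rightarrow> 'k \<Rightarrow> nat \<Rightarrow> nat \<Rightarrow> nat \<Rightarrow> (int list \<Rightarrow> 'k) \<Rightarrow> int list \<Rightarrow> 'k" where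
  "Tact Q q n d i f = (\<lambda>b. \<Sum>a\<in>words n d. f a * Tbasis Q q i a b)"

inductive_set WB_orbit :: "nat \<Rightarrow> int list \<Rightarrow> int list set" for d a where
  base: "a \<in> WB_orbit d a"
| s0: "b \<in> WB_orbit d a \<Longrightarrow> negfst b \<in> WB_orbit d a"
| si: "b \<in> WB_orbit d a \<Longrightarrow> 0 < i \<Longrightarrow> i < d \<Longrightarrow> swp i b \<in> WB_orbit d a"

text \<open>V(a,n) = span of {v_{\<sigma> a}}: the vectors supported on the orbit.\<close>
definition Vsub :: "nat \<Rightarrow> nat \<Rightarrow> int list \<Rightarrow> (int list \<Rightarrow> 'k::field) set" where
  "Vsub n d a = {f \<in> tensor_space n d. \<forall>b. b \<notin> WB_orbit d a \<longrightarrow> f b = 0}"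

definition HB_iso :: "'k::field \<Rightarrow> 'k \<Rightarrow> nat \<Rightarrow> nat \<Rightarrow> int list \<Rightarrow> nat \<Rightarrow> int list
                       \<Rightarrow> ((int list \<Rightarrow> 'k) \<Rightarrow> (int list \<Rightarrow> 'k)) \<Rightarrow> bool" where
  "HB_iso Q q d n a m b \<phi> \<longleftrightarrow>
     bij_betw \<phi> (Vsub n d a) (Vsub m d b) \<and>
     (\<forall>f\<in>Vsub n d a. \<forall>g\<in>Vsub n d a. \<phi> (\<lambda>x. f x + g x) = (\<lambda>x. \<phi> f x + \<phi> g x)) \<and>
     (\<forall>c. \<forall>f\<in>Vsub n d a. \<phi> (\<lambda>x. c * f x) = (\<lambda>x. c * \<phi> f x)) \<and>
     (\<forall>i<d. \<forall>f\<in>Vsub n d a. \<phi> (Tact Q q n d i f) = Tact Q q m d i (\<phi> f))"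

end

theory Submission
  imports Defs
begin

lemma finite_idx: "finite (idx n)"
proof -
  have "idx n \<subseteq> {-int n..int n}" unfolding idx_def by auto
  then show ?thesis by (rule finite_subset) simp
qed

lemma finite_words: "finite (words n d)"
proof -
  have "words n d = {xs. set xs \<subseteq> idx n \<and> length xs = d}" unfolding words_def by auto
  then show ?thesis using finite_lists_length_eq[OF finite_idx] by simp
qed

lemma idx_neg: "x \<in> idx n \<Longrightarrow> - x \<in> idx n"
  unfolding idx_def by (auto simp: even_add)

lemma orbit_length: "b \<in> WB_orbit d a \<Longrightarrow> length b = length a"
  by (induction rule: WB_orbit.induct) (auto simp: negfst_def swp_def)

lemma set_negfst: "set b \<subseteq> V \<Longrightarrow> (\<And>x. x \<in> V \<Longrightarrow> -x \<in> V) \<Longrightarrow> set (negfst b) \<subseteq> V"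
  unfolding negfst_def by (cases b) auto

lemma set_swp: "set b \<subseteq> V \<Longrightarrow> 0 < i \<Longrightarrow> i < length b \<Longrightarrow> set (swp i b) \<subseteq> V"
proof -
  assume h: "set b \<subseteq> V" "0 < i" "i < length b"
  have "set (swp i b) \<subseteq> insert (b ! (i - 1)) (insert (b ! i) (set b))"
    unfolding swp_def using set_update_subset_insert
    by (metis (no_types, lifting) insert_mono order_trans)
  moreover have "b ! (i - 1) \<in> V" "b ! i \<in> V" using h by auto
  ultimately show ?thesis using h by blast
qed

lemma orbit_set:
  assumes "b \<in> WB_orbit d a" "length a = d" "set a \<subseteq> V" "\<And>x. x \<in> V \<Longrightarrow> -x \<in> V"
  shows "set b \<subseteq> V"
  using assms(1)
proof induction
  case base then show ?case using assms by simp
next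
  case (s0 b) then show ?case using assms set_negfst by blast
next
  case (si b i) then show ?case using assms set_swp orbit_length by metis
qed

lemma orbit_words: "a \<in> words n d \<Longrightarrow> WB_orbit d a \<subseteq> words n d"
proof
  fix b assume a: "a \<in> words n d" and b: "b \<in> WB_orbit d a"
  have "set b \<subseteq> idx n" using orbit_set[OF b, of "idx n"] a idx_neg unfolding words_def by auto
  moreover have "length b = d" using orbit_length[OF b] a unfolding words_def by auto
  ultimately show "b \<in> words n d" unfolding words_def by auto
qed

lemma map_negfst: "(\<And>x. g (-x) = - g x) \<Longrightarrow> map g (negfst b) = negfst (map g b)"
  unfolding negfst_def by (cases b) auto

lemma map_swp: "0 < i \<Longrightarrow> i < length b \<Longrightarrow> map g (swp i b) = swp i (map g b)"
  unfolding swp_def by (simp add: map_update)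

lemma orbit_map:
  assumes odd: "\<And>x. g (-x) = - g x" and len: "length a = d"
  shows "map g ` WB_orbit d a = WB_orbit d (map g a)"
proof -
  have mn: "\<And>b. map g (negfst b) = negfst (map g b)" by (rule map_negfst) (rule odd)
  show ?thesis
proof
  show "map g ` WB_orbit d a \<subseteq> WB_orbit d (map g a)"
  proof
    fix c assume "c \<in> map g ` WB_orbit d a"
    then obtain x where x: "x \<in> WB_orbit d a" and c: "c = map g x" by auto
    have "map g x \<in> WB_orbit d (map g a)" using x
    proof induction
      case base then show ?case by (rule WB_orbit.base)
    next
      case (s0 b) then show ?case using mn WB_orbit.s0 by metis
    next
      case (si b i) then show ?case using map_swp[of i b g] WB_orbit.si orbit_length len by metis
    qed
    then show "c \<in> WB_orbit d (map g a)" using c by simp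
  qed
next
  show "WB_orbit d (map g a) \<subseteq> map g ` WB_orbit d a"
  proof
    fix c assume "c \<in> WB_orbit d (map g a)"
    then show "c \<in> map g ` WB_orbit d a"
    proof induction
      case base then show ?case using WB_orbit.base by blast
    next
      case (s0 b)
      then obtain x where x: "x \<in> WB_orbit d a" "b = map g x" by auto
      then have "negfst b = map g (negfst x)" using mn by metis
      then show ?case using x WB_orbit.s0 by blast
    next
      case (si b i)
      then obtain x where x: "x \<in> WB_orbit d a" "b = map g x" by auto
      then have "swp i b = map g (swp i x)" using map_swp[of i x g] si orbit_length len by metis
      then show ?case using x si WB_orbit.si by blast
    qed
  qed
qed
qed

lemma Tbasis_support:
  "Tbasis Q q i y c \<noteq> 0 \<Longrightarrow> c = y \<or> (i = 0 \<and> c = negfst y) \<or> (0 < i \<and> c = swp i y)"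
  unfolding Tbasis_def bvec_def Let_def by (auto split: if_splits)

lemma Tbasis_out:
  assumes "y \<in> WB_orbit d b" "c \<notin> WB_orbit d b" "i < d"
  shows "Tbasis Q q i y c = 0"
  using Tbasis_support[of Q q i y c] assms WB_orbit.s0 WB_orbit.si by blast


lemma Tbasis_map:
  assumes inj: "inj_on g V" and mono: "\<And>x y. x \<in> V \<Longrightarrow> y \<in> V \<Longrightarrow> x < y \<Longrightarrow> g x < g y"
  and sg: "\<And>x. x \<in> V \<Longrightarrow> (0 < g x \<longleftrightarrow> 0 < x) \<and> (g x = 0 \<longleftrightarrow> x = 0)"
  and odd: "\<And>x. g (-x) = - g x" and negV: "\<And>x. x \<in> V \<Longrightarrow> -x \<in> V"
  and x: "set x \<subseteq> V" and z: "set z \<subseteq> V" and i: "i < length x"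
  shows "Tbasis Q q i (map g x) (map g z) = Tbasis Q q i x z"
proof -
  have bv: "bvec (map g y) (map g z) = (bvec y z :: 'a)" if "set y \<subseteq> V" for y
  proof -
    have "inj_on g (set y \<union> set z)" using inj that z by (meson inj_on_subset le_sup_iff)
    then have "(map g z = map g y) = (z = y)" by (simp add: inj_on_map_eq_map Un_commute)
    then show ?thesis unfolding bvec_def by simp
  qed
  have mn: "\<And>b. map g (negfst b) = negfst (map g b)" by (rule map_negfst) (rule odd)
  show ?thesis
  proof (cases "i = 0")
    case True
    have u: "x ! 0 \<in> V" using x i True by auto
    have m0: "map g x ! 0 = g (x ! 0)" using i True by simp
    have e1: "bvec (negfst (map g x)) (map g z) = (bvec (negfst x) z :: 'a)"
      using bv[OF set_negfst[OF x negV]] mn by simp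
    have e2: "bvec (map g x) (map g z) = (bvec x z :: 'a)" using bv[OF x] .
    consider "x ! 0 = 0" | "x ! 0 > 0" | "x ! 0 < 0" by linarith
    then show ?thesis
    proof cases
      case 1 then show ?thesis using True m0 sg[OF u] e2 unfolding Tbasis_def Let_def by simp
    next
      case 2 then show ?thesis using True m0 sg[OF u] e1 unfolding Tbasis_def Let_def by simp
    next
      case 3 then show ?thesis using True m0 sg[OF u] e1 e2 unfolding Tbasis_def Let_def by auto
    qed
  next
    case False
    have u: "x ! (i - 1) \<in> V" "x ! i \<in> V" using x i by auto
    have m0: "map g x ! (i - 1) = g (x ! (i - 1))" "map g x ! i = g (x ! i)" using i by auto
    have e1: "bvec (swp i (map g x)) (map g z) = (bvec (swp i x) z :: 'a)"
      using bv[OF set_swp[OF x _ i]] map_swp[of i x g] False i by simp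
    have e2: "bvec (map g x) (map g z) = (bvec x z :: 'a)" using bv[OF x] .
    have eq: "g (x ! (i - 1)) = g (x ! i) \<longleftrightarrow> x ! (i - 1) = x ! i"
      by (rule inj_on_eq_iff[OF inj u(1) u(2)])
    have lt: "g (x ! (i - 1)) < g (x ! i) \<longleftrightarrow> x ! (i - 1) < x ! i"
      using mono u by (metis linorder_neqE_linordered_idom order_less_asym)
    consider "x ! (i - 1) = x ! i" | "x ! (i - 1) < x ! i" | "x ! (i - 1) > x ! i" by linarith
    then show ?thesis
    proof cases
      case 1 then show ?thesis using False m0 eq e2 unfolding Tbasis_def Let_def by simp
    next
      case 2 then show ?thesis using False m0 lt e1 unfolding Tbasis_def Let_def by simp
    next
      case 3 then show ?thesis using False m0 eq lt e1 e2 unfolding Tbasis_def Let_def by auto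
    qed
  qed
qed

lemma Vsub_eq: "WB_orbit d a \<subseteq> words n d \<Longrightarrow>
   Vsub n d a = {f. \<forall>x. x \<notin> WB_orbit d a \<longrightarrow> f x = 0}"
  unfolding Vsub_def tensor_space_def by auto

lemma iso_general:
  fixes Q q :: "'k::field"
  assumes bij: "bij_betw \<beta> (WB_orbit d a) (WB_orbit d b)"
  and Aw: "WB_orbit d a \<subseteq> words n d" and Bw: "WB_orbit d b \<subseteq> words m d"
  and tr: "\<And>i x z. i < d \<Longrightarrow> x \<in> WB_orbit d a \<Longrightarrow> z \<in> WB_orbit d a \<Longrightarrow>
              Tbasis Q q i (\<beta> x) (\<beta> z) = Tbasis Q q i x z"
  shows "\<exists>\<phi>. HB_iso Q q d n a m b \<phi>"
proof -
  define A where "A = WB_orbit d a"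
  define B where "B = WB_orbit d b"
  define \<alpha> where "\<alpha> = inv_into A \<beta>"
  have bij': "bij_betw \<beta> A B" using bij A_def B_def by simp
  have aB: "\<And>c. c \<in> B \<Longrightarrow> \<alpha> c \<in> A" unfolding \<alpha>_def using bij'
    by (metis bij_betw_imp_surj_on inv_into_into)
  have baB: "\<And>c. c \<in> B \<Longrightarrow> \<beta> (\<alpha> c) = c" unfolding \<alpha>_def using bij'
    by (meson bij_betw_inv_into_right)
  have abA: "\<And>x. x \<in> A \<Longrightarrow> \<alpha> (\<beta> x) = x" unfolding \<alpha>_def using bij'
    by (meson bij_betw_inv_into_left)
  have bA: "\<And>x. x \<in> A \<Longrightarrow> \<beta> x \<in> B" using bij' by (meson bij_betwE)
  define \<phi> :: "(int list \<Rightarrow> 'k) \<Rightarrow> int list \<Rightarrow> 'k" where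
    "\<phi> = (\<lambda>f c. if c \<in> B then f (\<alpha> c) else 0)"
  have VA: "Vsub n d a = {f. \<forall>x. x \<notin> A \<longrightarrow> f x = 0}" using Vsub_eq[OF Aw] A_def by simp
  have VB: "Vsub m d b = {f. \<forall>x. x \<notin> B \<longrightarrow> f x = 0}" using Vsub_eq[OF Bw] B_def by simp
  have finA: "finite A" using Aw finite_words A_def finite_subset by blast
  have bj: "bij_betw \<phi> (Vsub n d a) (Vsub m d b)"
    unfolding bij_betw_def
  proof
    show "inj_on \<phi> (Vsub n d a)"
    proof (rule inj_onI)
      fix f1 f2 assume f: "f1 \<in> Vsub n d a" "f2 \<in> Vsub n d a" and e: "\<phi> f1 = \<phi> f2"
      show "f1 = f2"
      proof
        fix x show "f1 x = f2 x"
        proof (cases "x \<in> A")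
          case True
          have "\<phi> f1 (\<beta> x) = \<phi> f2 (\<beta> x)" using e by simp
          then show ?thesis using True bA abA unfolding \<phi>_def by simp
        next
          case False
          have "\<forall>x. x \<notin> A \<longrightarrow> f1 x = 0" "\<forall>x. x \<notin> A \<longrightarrow> f2 x = 0"
            using f unfolding VA by simp_all
          then show ?thesis using False by simp
        qed
      qed
    qed
    show "\<phi> ` Vsub n d a = Vsub m d b"
    proof
      show "\<phi> ` Vsub n d a \<subseteq> Vsub m d b" using VB unfolding \<phi>_def by auto
      show "Vsub m d b \<subseteq> \<phi> ` Vsub n d a"
      proof
        fix F :: "int list \<Rightarrow> 'k" assume F: "F \<in> Vsub m d b"
        define f where "f = (\<lambda>x. if x \<in> A then F (\<beta> x) else 0)"
        have "f \<in> Vsub n d a" unfolding VA f_def by simp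
        moreover have "\<phi> f = F"
        proof
          fix c show "\<phi> f c = F c" using F VB aB baB unfolding \<phi>_def f_def by auto
        qed
        ultimately show "F \<in> \<phi> ` Vsub n d a" by blast
      qed
    qed
  qed
  have comm: "\<phi> (Tact Q q n d i f) = Tact Q q m d i (\<phi> f)" if i: "i < d" and f: "f \<in> Vsub n d a" for i f
  proof
    fix c
    have f0: "\<And>x. x \<notin> A \<Longrightarrow> f x = 0" using f unfolding VA by simp
    have R: "Tact Q q m d i (\<phi> f) c = (\<Sum>x\<in>A. f x * Tbasis Q q i (\<beta> x) c)"
    proof -
      have "Tact Q q m d i (\<phi> f) c = (\<Sum>y\<in>words m d. \<phi> f y * Tbasis Q q i y c)"
        unfolding Tact_def ..
      also have "\<dots> = (\<Sum>y\<in>B. \<phi> f y * Tbasis Q q i y c)"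
        using Bw B_def finite_words by (intro sum.mono_neutral_right) (auto simp: \<phi>_def)
      also have "\<dots> = (\<Sum>x\<in>A. \<phi> f (\<beta> x) * Tbasis Q q i (\<beta> x) c)"
        using sum.reindex_bij_betw[OF bij', of "\<lambda>y. \<phi> f y * Tbasis Q q i y c"] by simp
      also have "\<dots> = (\<Sum>x\<in>A. f x * Tbasis Q q i (\<beta> x) c)"
        using bA abA by (intro sum.cong) (auto simp: \<phi>_def)
      finally show ?thesis .
    qed
    show "\<phi> (Tact Q q n d i f) c = Tact Q q m d i (\<phi> f) c"
    proof (cases "c \<in> B")
      case True
      have "\<phi> (Tact Q q n d i f) c = (\<Sum>x\<in>words n d. f x * Tbasis Q q i x (\<alpha> c))"
        using True unfolding \<phi>_def Tact_def by simp
      also have "\<dots> = (\<Sum>x\<in>A. f x * Tbasis Q q i x (\<alpha> c))"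
        using Aw A_def finite_words f0 by (intro sum.mono_neutral_right) auto
      also have "\<dots> = (\<Sum>x\<in>A. f x * Tbasis Q q i (\<beta> x) c)"
      proof (intro sum.cong refl)
        fix x assume x: "x \<in> A"
        have "Tbasis Q q i (\<beta> x) (\<beta> (\<alpha> c)) = Tbasis Q q i x (\<alpha> c)"
          using tr[OF i] aB[OF True] x A_def by simp
        then show "f x * Tbasis Q q i x (\<alpha> c) = f x * Tbasis Q q i (\<beta> x) c"
          using baB[OF True] by simp
      qed
      finally show ?thesis using R by simp
    next
      case False
      have "(\<Sum>x\<in>A. f x * Tbasis Q q i (\<beta> x) c) = 0"
        using Tbasis_out[of _ d b c i Q q] bA False B_def i by (intro sum.neutral) auto
      then show ?thesis using R False unfolding \<phi>_def by simp
    qed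
  qed
  have "HB_iso Q q d n a m b \<phi>"
    unfolding HB_iso_def
  proof (intro conjI allI ballI impI)
    show "bij_betw \<phi> (Vsub n d a) (Vsub m d b)" by (rule bj)
  next
    fix f g show "\<phi> (\<lambda>x. f x + g x) = (\<lambda>x. \<phi> f x + \<phi> g x)" unfolding \<phi>_def by auto
  next
    fix c :: 'k and f show "\<phi> (\<lambda>x. c * f x) = (\<lambda>x. c * \<phi> f x)" unfolding \<phi>_def by auto
  next
    fix i and f :: "int list \<Rightarrow> 'k" assume "i < d" "f \<in> Vsub n d a" then show "\<phi> (Tact Q q n d i f) = Tact Q q m d i (\<phi> f)"
      by (rule comm)
  qed
  then show ?thesis by blast
qed


definition cnt :: "int set \<Rightarrow> int \<Rightarrow> nat" where
  "cnt P t = card {y\<in>P. 0 < y \<and> y \<le> t}"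

definition gmap :: "int set \<Rightarrow> int \<Rightarrow> int" where
  "gmap P x = (if 0 < x then 2 * int (cnt P x) else if x < 0 then - (2 * int (cnt P (- x))) else 0)"

lemma gmap_odd: "gmap P (- x) = - gmap P x"
  unfolding gmap_def by auto

lemma cnt_le: "finite P \<Longrightarrow> cnt P t \<le> card P"
  unfolding cnt_def by (intro card_mono) auto

lemma cnt_strict: assumes "finite P" "0 < s" "s < t" "t \<in> P" shows "cnt P s < cnt P t"
  unfolding cnt_def
proof (rule psubset_card_mono)
  show "finite {y \<in> P. 0 < y \<and> y \<le> t}" using assms by simp
  have "{y \<in> P. 0 < y \<and> y \<le> s} \<subseteq> {y \<in> P. 0 < y \<and> y \<le> t}" using assms by auto
  moreover have "t \<in> {y \<in> P. 0 < y \<and> y \<le> t}" "t \<notin> {y \<in> P. 0 < y \<and> y \<le> s}" using assms by auto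
  ultimately show "{y \<in> P. 0 < y \<and> y \<le> s} \<subset> {y \<in> P. 0 < y \<and> y \<le> t}" by blast
qed

lemma cnt_pos: assumes "finite P" "0 < t" "t \<in> P" shows "0 < cnt P t"
  unfolding cnt_def using assms by (subst card_gt_0_iff) auto

lemma gmap_mono:
  assumes fin: "finite P" and x: "\<bar>x\<bar> \<in> P" and y: "\<bar>y\<bar> \<in> P" and xy: "x < y"
  shows "gmap P x < gmap P y"
proof -
  consider "0 < x" | "x = 0" | "x < 0 \<and> 0 \<le> y" | "y < 0" using xy by linarith
  then show ?thesis
  proof cases
    case 1 then show ?thesis using cnt_strict[OF fin 1 xy] y xy unfolding gmap_def by auto
  next
    case 2 then show ?thesis using cnt_pos[OF fin, of y] y xy unfolding gmap_def by auto
  next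
    case 3 then show ?thesis using cnt_pos[OF fin, of "-x"] cnt_pos[OF fin, of y] x y xy
      unfolding gmap_def by (cases "y = 0") auto
  next
    case 4
    have "cnt P (- y) < cnt P (- x)" using cnt_strict[OF fin, of "-y" "-x"] 4 x xy by auto
    then show ?thesis using 4 xy unfolding gmap_def by auto
  qed
qed

lemma gmap_sign:
  assumes fin: "finite P" and x: "\<bar>x\<bar> \<in> P"
  shows "(0 < gmap P x \<longleftrightarrow> 0 < x) \<and> (gmap P x = 0 \<longleftrightarrow> x = 0)"
  using cnt_pos[OF fin, of x] cnt_pos[OF fin, of "-x"] x unfolding gmap_def by auto

lemma gmap_bound:
  assumes fin: "finite P"
  shows "\<bar>gmap P x\<bar> \<le> 2 * int (card P)" "even (gmap P x)"
  using cnt_le[OF fin, of x] cnt_le[OF fin, of "-x"] unfolding gmap_def by auto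


theorem lemma2p15:
  fixes Q q :: "'k::field" and d r :: nat
  assumes "Q \<noteq> 0" and "q \<noteq> 0" and "d \<ge> 1" and "r \<ge> d"
  shows "\<forall>n \<ge> 1. \<forall>a \<in> words n d. \<exists>b \<in> words (2 * r + 1) d.
           \<exists>\<phi>. HB_iso Q q d n a (2 * r + 1) b \<phi>"
proof (intro allI impI ballI)
  fix n a assume "1 \<le> n" and a: "a \<in> words n d"
  define P where "P = abs ` set a"
  define V where "V = {x. \<bar>x\<bar> \<in> P}"
  define g where "g = gmap P"
  define b where "b = map g a"
  define m where "m = 2 * r + 1"
  have la: "length a = d" using a unfolding words_def by simp
  have fin: "finite P" unfolding P_def by simp
  have cP: "card P \<le> d" unfolding P_def using la
    by (metis card_image_le card_length finite_set order_trans)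
  have aV: "set a \<subseteq> V" unfolding V_def P_def by auto
  have negV: "\<And>x. x \<in> V \<Longrightarrow> -x \<in> V" unfolding V_def by simp
  have odd: "\<And>x. g (-x) = - g x" unfolding g_def by (rule gmap_odd)
  have mono: "\<And>x y. x \<in> V \<Longrightarrow> y \<in> V \<Longrightarrow> x < y \<Longrightarrow> g x < g y"
    unfolding V_def g_def using gmap_mono[OF fin] by auto
  have sg: "\<And>x. x \<in> V \<Longrightarrow> (0 < g x \<longleftrightarrow> 0 < x) \<and> (g x = 0 \<longleftrightarrow> x = 0)"
    unfolding V_def g_def using gmap_sign[OF fin] by auto
  have inj: "inj_on g V"
  proof (rule inj_onI)
    fix x y assume "x \<in> V" "y \<in> V" "g x = g y"
    then show "x = y" using mono by (metis less_irrefl linorder_neqE_linordered_idom)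
  qed
  have bw: "b \<in> words m d"
    unfolding words_def
  proof (intro CollectI conjI)
    show "length b = d" using la b_def by simp
    show "set b \<subseteq> idx m"
    proof
      fix y assume "y \<in> set b"
      then obtain x where "y = g x" unfolding b_def by auto
      then have "\<bar>y\<bar> \<le> 2 * int d" "even y" using gmap_bound[OF fin, of x] cP unfolding g_def by auto
      then show "y \<in> idx m" unfolding idx_def m_def using assms(4) by auto
    qed
  qed
  have Aw: "WB_orbit d a \<subseteq> words n d" by (rule orbit_words[OF a])
  have Bw: "WB_orbit d b \<subseteq> words m d" by (rule orbit_words[OF bw])
  have AV: "\<And>x. x \<in> WB_orbit d a \<Longrightarrow> set x \<subseteq> V \<and> length x = d"
    using orbit_set[OF _ la aV negV] orbit_length la by auto
  have img: "map g ` WB_orbit d a = WB_orbit d b" unfolding b_def by (rule orbit_map[where g=g, OF odd la])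
  have injm: "inj_on (map g) (WB_orbit d a)"
  proof (rule inj_onI)
    fix x y assume "x \<in> WB_orbit d a" "y \<in> WB_orbit d a" "map g x = map g y"
    moreover then have "inj_on g (set x \<union> set y)" using AV inj by (meson inj_on_subset le_sup_iff)
    ultimately show "x = y" by (simp add: inj_on_map_eq_map)
  qed
  have bij: "bij_betw (map g) (WB_orbit d a) (WB_orbit d b)"
    using injm img unfolding bij_betw_def by simp
  have tr: "Tbasis Q q i (map g x) (map g z) = Tbasis Q q i x z"
    if "i < d" "x \<in> WB_orbit d a" "z \<in> WB_orbit d a" for i x z
    proof -
    have "set x \<subseteq> V" "set z \<subseteq> V" "i < length x" using AV that by auto
    then show ?thesis using Tbasis_map[where g=g and Q=Q and q=q and i=i and x=x and z=z and V=V] inj mono sg odd negV by blast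
  qed
  have "\<exists>\<phi>. HB_iso Q q d n a m b \<phi>" by (rule iso_general[OF bij Aw Bw tr])
  then show "\<exists>b \<in> words (2 * r + 1) d. \<exists>\<phi>. HB_iso Q q d n a (2 * r + 1) b \<phi>"
    using bw unfolding m_def by blast
qed

end
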